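(* Let $M$ be a monoidal category and $C$ an $M$-actegory. The functors $R:C\to\mathit{Tamb}_{C,M}$, $x\mapsto R_x$, $f\mapsto R_f$, and $L:C^{op}\to\mathit{Tamb}_{M,C}$, $x\mapsto L_x$, $f\mapsto L_f$, are fully faithful.
   Context: $(M,\otimes,I,\lambda,a)$ is a monoidal category; an $M$-actegory is a category $C$ with a functor $\odot:M\times C\to C$ and coherent natural isomorphisms $\lambda_x:I\odot x\to x$, $a_{m,n,x}:(m\otimes n)\odot x\to m\odot(n\odot x)$; $M$ is an $M$-actegory via $\otimes$. Composition is diagrammatic. For $M$-actegories $C,D$, $\mathit{Tamb}_{C,D}$ is the category of functors $P:C^{op}\times D\to\mathrm{Set}$ with strength maps $P(c,d)\to P(m\odot c,m\odot d)$ natural in $c,d$, (di)natural in $m$, compatible with unitors/associators; morphisms are strength-preserving natural transformations. $R_x\in\mathit{Tamb}_{C,M}$ is $(c,n)\mapsto C(c,n\odot x)$ with strength $h\mapsto(m\odot h);a^{-1}_{m,n,x}$; $L_x\in\mathit{Tamb}_{M,C}$ is $(n,c)\mapsto C(n\odot x,c)$ with strength $h\mapsto a_{m,n,x};(m\odot h)$. For $f:x\to y$, $R_f:R_x\Rightarrow R_y$ postcomposes with $n\odot f$ and $L_f:L_y\Rightarrow L_x$ precomposes with $n\odot f$. *)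

theory Defs
  imports Main
begin

record ('o, 'a) cat =
  Obj  :: "'o set"
  Hom  :: "'o \<Rightarrow> 'o \<Rightarrow> 'a set"
  Id   :: "'o \<Rightarrow> 'a"
  Comp :: "'a \<Rightarrow> 'a \<Rightarrow> 'a"   (* Comp f g = f ; g  (first f, then g) *)

definition is_cat :: "('o, 'a, 'z) cat_scheme \<Rightarrow> bool" where
  "is_cat C \<longleftrightarrow>
     (\<forall>a b. a \<notin> Obj C \<or> b \<notin> Obj C \<longrightarrow> Hom C a b = {}) \<and>
     (\<forall>a\<in>Obj C. Id C a \<in> Hom C a a) \<and>
     (\<forall>a b c f g. f \<in> Hom C a b \<and> g \<in> Hom C b c \<longrightarrow> Comp C f g \<in> Hom C a c) \<and>
     (\<forall>a b f. f \<in> Hom C a b \<longrightarrow> Comp C (Id C a) f = f \<and> Comp C f (Id C b) = f) \<and>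
     (\<forall>a b c d f g h. f \<in> Hom C a b \<and> g \<in> Hom C b c \<and> h \<in> Hom C c d \<longrightarrow>
        Comp C (Comp C f g) h = Comp C f (Comp C g h))"

definition is_iso :: "('o, 'a, 'z) cat_scheme \<Rightarrow> 'o \<Rightarrow> 'o \<Rightarrow> 'a \<Rightarrow> 'a \<Rightarrow> bool" where
  "is_iso C a b f g \<longleftrightarrow> f \<in> Hom C a b \<and> g \<in> Hom C b a \<and>
     Comp C f g = Id C a \<and> Comp C g f = Id C b"

definition bifunctor ::
  "('a, 'f, 'z1) cat_scheme \<Rightarrow> ('b, 'g, 'z2) cat_scheme \<Rightarrow> ('c, 'h, 'z3) cat_scheme \<Rightarrow>
   ('a \<Rightarrow> 'b \<Rightarrow> 'c) \<Rightarrow> ('f \<Rightarrow> 'g \<Rightarrow> 'h) \<Rightarrow> bool" where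
  "bifunctor A B C F Fa \<longleftrightarrow>
     (\<forall>a\<in>Obj A. \<forall>b\<in>Obj B. F a b \<in> Obj C) \<and>
     (\<forall>a a' b b' f g. f \<in> Hom A a a' \<and> g \<in> Hom B b b' \<longrightarrow> Fa f g \<in> Hom C (F a b) (F a' b')) \<and>
     (\<forall>a\<in>Obj A. \<forall>b\<in>Obj B. Fa (Id A a) (Id B b) = Id C (F a b)) \<and>
     (\<forall>a a' a'' b b' b'' f f' g g'.
        f \<in> Hom A a a' \<and> f' \<in> Hom A a' a'' \<and> g \<in> Hom B b b' \<and> g' \<in> Hom B b' b'' \<longrightarrow>
        Fa (Comp A f f') (Comp B g g') = Comp C (Fa f g) (Fa f' g'))"

record ('m, 'ma) moncat = "('m, 'ma) cat" +
  tens_ob :: "'m \<Rightarrow> 'm \<Rightarrow> 'm"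
  tens    :: "'ma \<Rightarrow> 'ma \<Rightarrow> 'ma"
  unit_ob :: "'m"
  lu      :: "'m \<Rightarrow> 'ma"
  lu_inv  :: "'m \<Rightarrow> 'ma"
  ru      :: "'m \<Rightarrow> 'ma"
  ru_inv  :: "'m \<Rightarrow> 'ma"
  asc     :: "'m \<Rightarrow> 'm \<Rightarrow> 'm \<Rightarrow> 'ma"
  asc_inv :: "'m \<Rightarrow> 'm \<Rightarrow> 'm \<Rightarrow> 'ma"

definition monoidal :: "('m, 'ma) moncat \<Rightarrow> bool" where
  "monoidal M \<longleftrightarrow> is_cat M \<and> bifunctor M M M (tens_ob M) (tens M) \<and> unit_ob M \<in> Obj M \<and>
     (\<forall>m\<in>Obj M. is_iso M (tens_ob M (unit_ob M) m) m (lu M m) (lu_inv M m)) \<and>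
     (\<forall>m\<in>Obj M. is_iso M (tens_ob M m (unit_ob M)) m (ru M m) (ru_inv M m)) \<and>
     (\<forall>m\<in>Obj M. \<forall>n\<in>Obj M. \<forall>p\<in>Obj M.
        is_iso M (tens_ob M (tens_ob M m n) p) (tens_ob M m (tens_ob M n p))
                 (asc M m n p) (asc_inv M m n p)) \<and>
     (\<forall>m m' f. f \<in> Hom M m m' \<longrightarrow>
        Comp M (tens M (Id M (unit_ob M)) f) (lu M m') = Comp M (lu M m) f) \<and>
     (\<forall>m m' f. f \<in> Hom M m m' \<longrightarrow>
        Comp M (tens M f (Id M (unit_ob M))) (ru M m') = Comp M (ru M m) f) \<and>
     (\<forall>m m' n n' p p' f g h. f \<in> Hom M m m' \<and> g \<in> Hom M n n' \<and> h \<in> Hom M p p' \<longrightarrow>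
        Comp M (tens M (tens M f g) h) (asc M m' n' p') = Comp M (asc M m n p) (tens M f (tens M g h))) \<and>
     (\<forall>m\<in>Obj M. \<forall>n\<in>Obj M. \<forall>p\<in>Obj M. \<forall>q\<in>Obj M.
        Comp M (asc M (tens_ob M m n) p q) (asc M m n (tens_ob M p q)) =
        Comp M (tens M (asc M m n p) (Id M q))
          (Comp M (asc M m (tens_ob M n p) q) (tens M (Id M m) (asc M n p q)))) \<and>
     (\<forall>m\<in>Obj M. \<forall>n\<in>Obj M.
        Comp M (asc M m (unit_ob M) n) (tens M (Id M m) (lu M n)) = tens M (ru M m) (Id M n))"

record ('m, 'ma, 'c, 'ca) actegory = "('c, 'ca) cat" +
  act_ob    :: "'m \<Rightarrow> 'c \<Rightarrow> 'c"
  act       :: "'ma \<Rightarrow> 'ca \<Rightarrow> 'ca"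
  act_lu     :: "'c \<Rightarrow> 'ca"
  act_lu_inv :: "'c \<Rightarrow> 'ca"
  act_as     :: "'m \<Rightarrow> 'm \<Rightarrow> 'c \<Rightarrow> 'ca"
  act_as_inv :: "'m \<Rightarrow> 'm \<Rightarrow> 'c \<Rightarrow> 'ca"

definition is_actegory :: "('m, 'ma) moncat \<Rightarrow> ('m, 'ma, 'c, 'ca) actegory \<Rightarrow> bool" where
  "is_actegory M C \<longleftrightarrow> is_cat C \<and> bifunctor M C C (act_ob C) (act C) \<and>
     (\<forall>x\<in>Obj C. is_iso C (act_ob C (unit_ob M) x) x (act_lu C x) (act_lu_inv C x)) \<and>
     (\<forall>m\<in>Obj M. \<forall>n\<in>Obj M. \<forall>x\<in>Obj C.
        is_iso C (act_ob C (tens_ob M m n) x) (act_ob C m (act_ob C n x))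
                 (act_as C m n x) (act_as_inv C m n x)) \<and>
     (\<forall>x x' f. f \<in> Hom C x x' \<longrightarrow>
        Comp C (act C (Id M (unit_ob M)) f) (act_lu C x') = Comp C (act_lu C x) f) \<and>
     (\<forall>m m' n n' x x' g h f. g \<in> Hom M m m' \<and> h \<in> Hom M n n' \<and> f \<in> Hom C x x' \<longrightarrow>
        Comp C (act C (tens M g h) f) (act_as C m' n' x') =
        Comp C (act_as C m n x) (act C g (act C h f))) \<and>
     (\<forall>m\<in>Obj M. \<forall>n\<in>Obj M. \<forall>p\<in>Obj M. \<forall>x\<in>Obj C.
        Comp C (act_as C (tens_ob M m n) p x) (act_as C m n (act_ob C p x)) =
        Comp C (act C (asc M m n p) (Id C x))
          (Comp C (act_as C m (tens_ob M n p) x) (act C (Id M m) (act_as C n p x)))) \<and>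
     (\<forall>m\<in>Obj M. \<forall>x\<in>Obj C.
        Comp C (act_as C (unit_ob M) m x) (act_lu C (act_ob C m x)) = act C (lu M m) (Id C x)) \<and>
     (\<forall>m\<in>Obj M. \<forall>x\<in>Obj C.
        Comp C (act_as C m (unit_ob M) x) (act C (Id M m) (act_lu C x)) = act C (ru M m) (Id C x))"

text \<open>A profunctor P : C^op x D \<rightarrow> Set with strength, values being sets of elements of type 'v.
  pmor f g u is the action P(f,g) for f : c' \<rightarrow> c in C and g : d \<rightarrow> d' in D;
  pstr m c d u is the strength P(c,d) \<rightarrow> P(m.c, m.d).\<close>

record ('c, 'ca, 'd, 'da, 'm, 'v) tambara =
  pob  :: "'c \<Rightarrow> 'd \<Rightarrow> 'v set"
  pmor :: "'ca \<Rightarrow> 'da \<Rightarrow> 'v \<Rightarrow> 'v"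
  pstr :: "'m \<Rightarrow> 'c \<Rightarrow> 'd \<Rightarrow> 'v \<Rightarrow> 'v"

definition tamb_mor ::
  "('c, 'ca, 'z1) cat_scheme \<Rightarrow> ('d, 'da, 'z2) cat_scheme \<Rightarrow> 'm set \<Rightarrow>
   ('m \<Rightarrow> 'c \<Rightarrow> 'c) \<Rightarrow> ('m \<Rightarrow> 'd \<Rightarrow> 'd) \<Rightarrow>
   ('c, 'ca, 'd, 'da, 'm, 'v) tambara \<Rightarrow> ('c, 'ca, 'd, 'da, 'm, 'w) tambara \<Rightarrow>
   ('c \<Rightarrow> 'd \<Rightarrow> 'v \<Rightarrow> 'w) \<Rightarrow> bool" where
  "tamb_mor C D MO actC actD P Q \<tau> \<longleftrightarrow>
     (\<forall>c\<in>Obj C. \<forall>d\<in>Obj D. \<forall>u\<in>pob P c d. \<tau> c d u \<in> pob Q c d) \<and>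
     (\<forall>c c' d d' f g u. c \<in> Obj C \<and> c' \<in> Obj C \<and> d \<in> Obj D \<and> d' \<in> Obj D \<and>
        f \<in> Hom C c' c \<and> g \<in> Hom D d d' \<and> u \<in> pob P c d \<longrightarrow>
        \<tau> c' d' (pmor P f g u) = pmor Q f g (\<tau> c d u)) \<and>
     (\<forall>m\<in>MO. \<forall>c\<in>Obj C. \<forall>d\<in>Obj D. \<forall>u\<in>pob P c d.
        \<tau> (actC m c) (actD m d) (pstr P m c d u) = pstr Q m c d (\<tau> c d u))"

definition tamb_eq ::
  "('c, 'ca, 'z1) cat_scheme \<Rightarrow> ('d, 'da, 'z2) cat_scheme \<Rightarrow>
   ('c, 'ca, 'd, 'da, 'm, 'v) tambara \<Rightarrow> ('c \<Rightarrow> 'd \<Rightarrow> 'v \<Rightarrow> 'w) \<Rightarrow> ('c \<Rightarrow> 'd \<Rightarrow> 'v \<Rightarrow> 'w) \<Rightarrow> bool" where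
  "tamb_eq C D P \<tau> \<sigma> \<longleftrightarrow> (\<forall>c\<in>Obj C. \<forall>d\<in>Obj D. \<forall>u\<in>pob P c d. \<tau> c d u = \<sigma> c d u)"

definition Rprof :: "('m, 'ma) moncat \<Rightarrow> ('m, 'ma, 'c, 'ca) actegory \<Rightarrow> 'c \<Rightarrow>
    ('c, 'ca, 'm, 'ma, 'm, 'ca) tambara" where
  "Rprof M C x =
     \<lparr> pob = (\<lambda>c n. Hom C c (act_ob C n x)),
       pmor = (\<lambda>f g h. Comp C f (Comp C h (act C g (Id C x)))),
       pstr = (\<lambda>m c n h. Comp C (act C (Id M m) h) (act_as_inv C m n x)) \<rparr>"

definition Rmor :: "('m, 'ma) moncat \<Rightarrow> ('m, 'ma, 'c, 'ca) actegory \<Rightarrow> 'ca \<Rightarrow> 'c \<Rightarrow> 'm \<Rightarrow> 'ca \<Rightarrow> 'ca" where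
  "Rmor M C f = (\<lambda>c n h. Comp C h (act C (Id M n) f))"

definition Lprof :: "('m, 'ma) moncat \<Rightarrow> ('m, 'ma, 'c, 'ca) actegory \<Rightarrow> 'c \<Rightarrow>
    ('m, 'ma, 'c, 'ca, 'm, 'ca) tambara" where
  "Lprof M C x =
     \<lparr> pob = (\<lambda>n c. Hom C (act_ob C n x) c),
       pmor = (\<lambda>g f h. Comp C (act C g (Id C x)) (Comp C h f)),
       pstr = (\<lambda>m n c h. Comp C (act_as C m n x) (act C (Id M m) h)) \<rparr>"

definition Lmor :: "('m, 'ma) moncat \<Rightarrow> ('m, 'ma, 'c, 'ca) actegory \<Rightarrow> 'ca \<Rightarrow> 'm \<Rightarrow> 'c \<Rightarrow> 'ca \<Rightarrow> 'ca" where
  "Lmor M C f = (\<lambda>n c h. Comp C (act C (Id M n) f) h)"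

end

theory Submission imports Defs begin

locale actx =
  fixes M :: "('m, 'ma) moncat" and C :: "('m, 'ma, 'c, 'ca) actegory"
  assumes mon: "monoidal M" and actg: "is_actegory M C"
begin

lemma catC: "is_cat C" using actg unfolding is_actegory_def by (elim conjE) auto
lemma catM: "is_cat M" using mon unfolding monoidal_def by (elim conjE) auto

lemma C_obj: "f \<in> Hom C a b \<Longrightarrow> a \<in> Obj C \<and> b \<in> Obj C"
  using catC unfolding is_cat_def by blast
lemma C_id: "a \<in> Obj C \<Longrightarrow> Id C a \<in> Hom C a a"
  using catC unfolding is_cat_def by blast
lemma C_comp: "f \<in> Hom C a b \<Longrightarrow> g \<in> Hom C b c \<Longrightarrow> Comp C f g \<in> Hom C a c"
  using catC unfolding is_cat_def by blast
lemma C_idl: "f \<in> Hom C a b \<Longrightarrow> Comp C (Id C a) f = f"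
  using catC unfolding is_cat_def by blast
lemma C_idr: "f \<in> Hom C a b \<Longrightarrow> Comp C f (Id C b) = f"
  using catC unfolding is_cat_def by blast
lemma C_assoc: "f \<in> Hom C a b \<Longrightarrow> g \<in> Hom C b c \<Longrightarrow> h \<in> Hom C c d \<Longrightarrow>
   Comp C (Comp C f g) h = Comp C f (Comp C g h)"
  using catC unfolding is_cat_def by blast

lemma M_obj: "f \<in> Hom M a b \<Longrightarrow> a \<in> Obj M \<and> b \<in> Obj M"
  using catM unfolding is_cat_def by blast
lemma M_id: "a \<in> Obj M \<Longrightarrow> Id M a \<in> Hom M a a"
  using catM unfolding is_cat_def by blast
lemma M_idl: "f \<in> Hom M a b \<Longrightarrow> Comp M (Id M a) f = f"
  using catM unfolding is_cat_def by blast
lemma M_idr: "f \<in> Hom M a b \<Longrightarrow> Comp M f (Id M b) = f"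
  using catM unfolding is_cat_def by blast

lemma bif_act: "bifunctor M C C (act_ob C) (act C)" using actg unfolding is_actegory_def by (elim conjE) auto
lemma bif_tens: "bifunctor M M M (tens_ob M) (tens M)" using mon unfolding monoidal_def by (elim conjE) auto

lemma act_obj: "m \<in> Obj M \<Longrightarrow> x \<in> Obj C \<Longrightarrow> act_ob C m x \<in> Obj C"
  using bif_act unfolding bifunctor_def by blast
lemma act_hom: "g \<in> Hom M m m' \<Longrightarrow> f \<in> Hom C x x' \<Longrightarrow> act C g f \<in> Hom C (act_ob C m x) (act_ob C m' x')"
  using bif_act unfolding bifunctor_def by blast
lemma act_id: "m \<in> Obj M \<Longrightarrow> x \<in> Obj C \<Longrightarrow> act C (Id M m) (Id C x) = Id C (act_ob C m x)"
  using bif_act unfolding bifunctor_def by blast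
lemma act_comp: "f \<in> Hom M a a' \<Longrightarrow> f' \<in> Hom M a' a'' \<Longrightarrow> g \<in> Hom C b b' \<Longrightarrow> g' \<in> Hom C b' b'' \<Longrightarrow>
   act C (Comp M f f') (Comp C g g') = Comp C (act C f g) (act C f' g')"
  using bif_act unfolding bifunctor_def by blast

lemma tens_obj: "m \<in> Obj M \<Longrightarrow> n \<in> Obj M \<Longrightarrow> tens_ob M m n \<in> Obj M"
  using bif_tens unfolding bifunctor_def by blast
lemma tens_id: "m \<in> Obj M \<Longrightarrow> n \<in> Obj M \<Longrightarrow> tens M (Id M m) (Id M n) = Id M (tens_ob M m n)"
  using bif_tens unfolding bifunctor_def by blast
lemma unit_obj: "unit_ob M \<in> Obj M" using mon unfolding monoidal_def by (elim conjE) auto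

lemma ru_iso: "m \<in> Obj M \<Longrightarrow> is_iso M (tens_ob M m (unit_ob M)) m (ru M m) (ru_inv M m)"
  using mon unfolding monoidal_def by (elim conjE) auto
lemma lu_iso: "x \<in> Obj C \<Longrightarrow> is_iso C (act_ob C (unit_ob M) x) x (act_lu C x) (act_lu_inv C x)"
  using actg unfolding is_actegory_def by (elim conjE) auto
lemma as_iso: "m \<in> Obj M \<Longrightarrow> n \<in> Obj M \<Longrightarrow> x \<in> Obj C \<Longrightarrow>
   is_iso C (act_ob C (tens_ob M m n) x) (act_ob C m (act_ob C n x)) (act_as C m n x) (act_as_inv C m n x)"
  using actg unfolding is_actegory_def by (elim conjE) auto
lemma lu_nat: "f \<in> Hom C x x' \<Longrightarrow>
        Comp C (act C (Id M (unit_ob M)) f) (act_lu C x') = Comp C (act_lu C x) f"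
  using actg unfolding is_actegory_def by (elim conjE) auto
lemma as_nat: "g \<in> Hom M m m' \<Longrightarrow> h \<in> Hom M n n' \<Longrightarrow> f \<in> Hom C x x' \<Longrightarrow>
        Comp C (act C (tens M g h) f) (act_as C m' n' x') =
        Comp C (act_as C m n x) (act C g (act C h f))"
  using actg unfolding is_actegory_def by (elim conjE) auto
lemma coh_ru: "m \<in> Obj M \<Longrightarrow> x \<in> Obj C \<Longrightarrow>
        Comp C (act_as C m (unit_ob M) x) (act C (Id M m) (act_lu C x)) = act C (ru M m) (Id C x)"
  using actg unfolding is_actegory_def by (elim conjE) auto


abbreviation "I \<equiv> unit_ob M"

lemma lu_hom: "x \<in> Obj C \<Longrightarrow> act_lu C x \<in> Hom C (act_ob C I x) x" using lu_iso unfolding is_iso_def by auto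
lemma lui_hom: "x \<in> Obj C \<Longrightarrow> act_lu_inv C x \<in> Hom C x (act_ob C I x)" using lu_iso unfolding is_iso_def by auto
lemma lu_lui: "x \<in> Obj C \<Longrightarrow> Comp C (act_lu C x) (act_lu_inv C x) = Id C (act_ob C I x)" using lu_iso unfolding is_iso_def by auto
lemma lui_lu: "x \<in> Obj C \<Longrightarrow> Comp C (act_lu_inv C x) (act_lu C x) = Id C x" using lu_iso unfolding is_iso_def by auto
lemma ru_hom: "m \<in> Obj M \<Longrightarrow> ru M m \<in> Hom M (tens_ob M m I) m" using ru_iso unfolding is_iso_def by auto
lemma rui_hom: "m \<in> Obj M \<Longrightarrow> ru_inv M m \<in> Hom M m (tens_ob M m I)" using ru_iso unfolding is_iso_def by auto
lemma rui_ru: "m \<in> Obj M \<Longrightarrow> Comp M (ru_inv M m) (ru M m) = Id M m" using ru_iso unfolding is_iso_def by auto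
lemma as_hom: "m \<in> Obj M \<Longrightarrow> n \<in> Obj M \<Longrightarrow> x \<in> Obj C \<Longrightarrow>
  act_as C m n x \<in> Hom C (act_ob C (tens_ob M m n) x) (act_ob C m (act_ob C n x))" using as_iso unfolding is_iso_def by auto
lemma asi_hom: "m \<in> Obj M \<Longrightarrow> n \<in> Obj M \<Longrightarrow> x \<in> Obj C \<Longrightarrow>
  act_as_inv C m n x \<in> Hom C (act_ob C m (act_ob C n x)) (act_ob C (tens_ob M m n) x)" using as_iso unfolding is_iso_def by auto
lemma as_asi: "m \<in> Obj M \<Longrightarrow> n \<in> Obj M \<Longrightarrow> x \<in> Obj C \<Longrightarrow>
  Comp C (act_as C m n x) (act_as_inv C m n x) = Id C (act_ob C (tens_ob M m n) x)" using as_iso unfolding is_iso_def by auto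
lemma asi_as: "m \<in> Obj M \<Longrightarrow> n \<in> Obj M \<Longrightarrow> x \<in> Obj C \<Longrightarrow>
  Comp C (act_as_inv C m n x) (act_as C m n x) = Id C (act_ob C m (act_ob C n x))" using as_iso unfolding is_iso_def by auto

lemma act_idcomp: "m \<in> Obj M \<Longrightarrow> h \<in> Hom C a b \<Longrightarrow> k \<in> Hom C b c \<Longrightarrow>
  act C (Id M m) (Comp C h k) = Comp C (act C (Id M m) h) (act C (Id M m) k)"
proof -
  assume m: "m \<in> Obj M" and h: "h \<in> Hom C a b" and k: "k \<in> Hom C b c"
  have "act C (Comp M (Id M m) (Id M m)) (Comp C h k) = Comp C (act C (Id M m) h) (act C (Id M m) k)"
    by (rule act_comp[OF M_id[OF m] M_id[OF m] h k])
  then show ?thesis using M_idl[OF M_id[OF m]] by simp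
qed

lemma act_compid: "g \<in> Hom M a b \<Longrightarrow> g' \<in> Hom M b c \<Longrightarrow> x \<in> Obj C \<Longrightarrow>
  act C (Comp M g g') (Id C x) = Comp C (act C g (Id C x)) (act C g' (Id C x))"
proof -
  assume g: "g \<in> Hom M a b" and g': "g' \<in> Hom M b c" and x: "x \<in> Obj C"
  have "act C (Comp M g g') (Comp C (Id C x) (Id C x)) = Comp C (act C g (Id C x)) (act C g' (Id C x))"
    by (rule act_comp[OF g g' C_id[OF x] C_id[OF x]])
  then show ?thesis using C_idl[OF C_id[OF x]] by simp
qed

lemma act_gf1: "g \<in> Hom M n n' \<Longrightarrow> f \<in> Hom C x y \<Longrightarrow>
  Comp C (act C g (Id C x)) (act C (Id M n') f) = act C g f"
proof -
  assume g: "g \<in> Hom M n n'" and f: "f \<in> Hom C x y"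
  have "act C (Comp M g (Id M n')) (Comp C (Id C x) f) = Comp C (act C g (Id C x)) (act C (Id M n') f)"
    by (rule act_comp[OF g M_id C_id f]) (use g f M_obj C_obj in auto)
  then show ?thesis using M_idr[OF g] C_idl[OF f] by simp
qed
lemma act_gf2: "g \<in> Hom M n n' \<Longrightarrow> f \<in> Hom C x y \<Longrightarrow>
  Comp C (act C (Id M n) f) (act C g (Id C y)) = act C g f"
proof -
  assume g: "g \<in> Hom M n n'" and f: "f \<in> Hom C x y"
  have "act C (Comp M (Id M n) g) (Comp C f (Id C y)) = Comp C (act C (Id M n) f) (act C g (Id C y))"
    by (rule act_comp[OF M_id g f C_id]) (use g f M_obj C_obj in auto)
  then show ?thesis using M_idl[OF g] C_idr[OF f] by simp
qed

lemma iso_swap: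
  assumes "is_iso C a b p p'" "is_iso C a' b' q q'" "u \<in> Hom C a a'" "v \<in> Hom C b b'"
    "Comp C u q = Comp C p v"
  shows "Comp C p' u = Comp C v q'"
proof -
  have h: "p \<in> Hom C a b" "p' \<in> Hom C b a" "Comp C p p' = Id C a" "Comp C p' p = Id C b"
     "q \<in> Hom C a' b'" "q' \<in> Hom C b' a'" "Comp C q q' = Id C a'" "Comp C q' q = Id C b'"
    using assms(1,2) unfolding is_iso_def by auto
  have "Comp C p' u = Comp C p' (Comp C u (Comp C q q'))" using h(7) C_idr[OF assms(3)] by simp
  also have "\<dots> = Comp C p' (Comp C (Comp C u q) q')" using C_assoc[OF assms(3) h(5) h(6)] by simp
  also have "\<dots> = Comp C p' (Comp C (Comp C p v) q')" using assms by simp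
  also have "\<dots> = Comp C p' (Comp C p (Comp C v q'))" using C_assoc[OF h(1) assms(4) h(6)] by simp
  also have "\<dots> = Comp C (Comp C p' p) (Comp C v q')" using C_assoc[OF h(2) h(1) C_comp[OF assms(4) h(6)]] by simp
  also have "\<dots> = Comp C v q'" using h(4) C_idl[OF C_comp[OF assms(4) h(6)]] by simp
  finally show ?thesis .
qed

lemma asi_nat: assumes m: "m \<in> Obj M" and n: "n \<in> Obj M" and f: "f \<in> Hom C x y"
  shows "Comp C (act_as_inv C m n x) (act C (Id M (tens_ob M m n)) f) =
         Comp C (act C (Id M m) (act C (Id M n) f)) (act_as_inv C m n y)"
proof -
  have x: "x \<in> Obj C" and y: "y \<in> Obj C" using C_obj[OF f] by auto
  have e: "Comp C (act C (tens M (Id M m) (Id M n)) f) (act_as C m n y) =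
        Comp C (act_as C m n x) (act C (Id M m) (act C (Id M n) f))"
    by (rule as_nat[OF M_id[OF m] M_id[OF n] f])
  show ?thesis
    apply (rule iso_swap[OF as_iso[OF m n x] as_iso[OF m n y]])
      apply (rule act_hom[OF M_id[OF tens_obj[OF m n]] f])
     apply (rule act_hom[OF M_id[OF m] act_hom[OF M_id[OF n] f]])
    using e tens_id[OF m n] by simp
qed

lemma asi_ru: assumes n: "n \<in> Obj M" and z: "z \<in> Obj C"
  shows "Comp C (act_as_inv C n I z) (act C (ru M n) (Id C z)) = act C (Id M n) (act_lu C z)"
proof -
  have h: "act C (Id M n) (act_lu C z) \<in> Hom C (act_ob C n (act_ob C I z)) (act_ob C n z)"
    by (rule act_hom[OF M_id[OF n] lu_hom[OF z]])
  have "Comp C (act_as_inv C n I z) (act C (ru M n) (Id C z)) =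
    Comp C (act_as_inv C n I z) (Comp C (act_as C n I z) (act C (Id M n) (act_lu C z)))"
    using coh_ru[OF n z] by simp
  also have "\<dots> = Comp C (Comp C (act_as_inv C n I z) (act_as C n I z)) (act C (Id M n) (act_lu C z))"
    using C_assoc[OF asi_hom[OF n unit_obj z] as_hom[OF n unit_obj z] h] by simp
  also have "\<dots> = act C (Id M n) (act_lu C z)"
    using asi_as[OF n unit_obj z] C_idl[OF h] by simp
  finally show ?thesis .
qed

lemma R_key: assumes n: "n \<in> Obj M" and z: "z \<in> Obj C" and w: "w \<in> Hom C x' (act_ob C I z)"
  shows "Comp C (Comp C (act C (Id M n) w) (act_as_inv C n I z)) (act C (ru M n) (Id C z)) =
         act C (Id M n) (Comp C w (act_lu C z))"
proof -
  have h1: "act C (Id M n) w \<in> Hom C (act_ob C n x') (act_ob C n (act_ob C I z))"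
    by (rule act_hom[OF M_id[OF n] w])
  have h3: "act C (ru M n) (Id C z) \<in> Hom C (act_ob C (tens_ob M n I) z) (act_ob C n z)"
    by (rule act_hom[OF ru_hom[OF n] C_id[OF z]])
  show ?thesis
    using C_assoc[OF h1 asi_hom[OF n unit_obj z] h3] asi_ru[OF n z] act_idcomp[OF n w lu_hom[OF z]]
    by simp
qed

lemma L_key: assumes n: "n \<in> Obj M" and x: "x \<in> Obj C" and w: "w \<in> Hom C (act_ob C I x) z"
  shows "Comp C (act C (ru_inv M n) (Id C x)) (Comp C (act_as C n I x) (act C (Id M n) w)) =
         act C (Id M n) (Comp C (act_lu_inv C x) w)"
proof -
  have lw: "Comp C (act_lu_inv C x) w \<in> Hom C x z" by (rule C_comp[OF lui_hom[OF x] w])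
  have w': "w = Comp C (act_lu C x) (Comp C (act_lu_inv C x) w)"
    using C_assoc[OF lu_hom[OF x] lui_hom[OF x] w] lu_lui[OF x] C_idl[OF w] by simp
  have A: "act C (Id M n) w = Comp C (act C (Id M n) (act_lu C x)) (act C (Id M n) (Comp C (act_lu_inv C x) w))"
    using act_idcomp[OF n lu_hom[OF x] lw] w' by simp
  have h1: "act C (ru_inv M n) (Id C x) \<in> Hom C (act_ob C n x) (act_ob C (tens_ob M n I) x)"
    by (rule act_hom[OF rui_hom[OF n] C_id[OF x]])
  have h2: "act C (Id M n) (act_lu C x) \<in> Hom C (act_ob C n (act_ob C I x)) (act_ob C n x)"
    by (rule act_hom[OF M_id[OF n] lu_hom[OF x]])
  have h3: "act C (Id M n) (Comp C (act_lu_inv C x) w) \<in> Hom C (act_ob C n x) (act_ob C n z)"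
    by (rule act_hom[OF M_id[OF n] lw])
  have h4: "act C (ru M n) (Id C x) \<in> Hom C (act_ob C (tens_ob M n I) x) (act_ob C n x)"
    by (rule act_hom[OF ru_hom[OF n] C_id[OF x]])
  have rr: "Comp C (act C (ru_inv M n) (Id C x)) (act C (ru M n) (Id C x)) = Id C (act_ob C n x)"
    using act_compid[OF rui_hom[OF n] ru_hom[OF n] x, symmetric] rui_ru[OF n] act_id[OF n x] by simp
  have "Comp C (act_as C n I x) (act C (Id M n) w) =
     Comp C (Comp C (act_as C n I x) (act C (Id M n) (act_lu C x))) (act C (Id M n) (Comp C (act_lu_inv C x) w))"
    using A C_assoc[OF as_hom[OF n unit_obj x] h2 h3] by simp
  also have "\<dots> = Comp C (act C (ru M n) (Id C x)) (act C (Id M n) (Comp C (act_lu_inv C x) w))"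
    using coh_ru[OF n x] by simp
  finally have B: "Comp C (act_as C n I x) (act C (Id M n) w) = Comp C (act C (ru M n) (Id C x)) (act C (Id M n) (Comp C (act_lu_inv C x) w))" .
  show ?thesis
    unfolding B
    using C_assoc[OF h1 h4 h3, symmetric] rr C_idl[OF h3] by simp
qed

lemma lu_cancel: assumes f: "f \<in> Hom C x y"
  shows "Comp C (act_lu_inv C x) (Comp C (act C (Id M I) f) (act_lu C y)) = f"
proof -
  have x: "x \<in> Obj C" and y: "y \<in> Obj C" using C_obj[OF f] by auto
  show ?thesis using lu_nat[OF f] C_assoc[OF lui_hom[OF x] lu_hom[OF x] f, symmetric] lui_lu[OF x] C_idl[OF f]
    by simp
qed

lemma R_mor: assumes f: "f \<in> Hom C x y"
  shows "tamb_mor C M (Obj M) (act_ob C) (tens_ob M) (Rprof M C x) (Rprof M C y) (Rmor M C f)"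
  unfolding tamb_mor_def Rprof_def Rmor_def
proof (simp, intro conjI ballI allI impI)
  fix c n h assume n: "n \<in> Obj M" and h: "h \<in> Hom C c (act_ob C n x)"
  show "Comp C h (act C (Id M n) f) \<in> Hom C c (act_ob C n y)"
    by (rule C_comp[OF h act_hom[OF M_id[OF n] f]])
next
  fix c c' d d' f' g h
  assume H: "c \<in> Obj C \<and> c' \<in> Obj C \<and> d \<in> Obj M \<and> d' \<in> Obj M \<and>
       f' \<in> Hom C c' c \<and> g \<in> Hom M d d' \<and> h \<in> Hom C c (act_ob C d x)"
  have x: "x \<in> Obj C" and y: "y \<in> Obj C" using C_obj[OF f] by auto
  have f': "f' \<in> Hom C c' c" and g: "g \<in> Hom M d d'" and h: "h \<in> Hom C c (act_ob C d x)" using H by auto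
  have d: "d \<in> Obj M" "d' \<in> Obj M" using H by auto
  have a1: "act C g (Id C x) \<in> Hom C (act_ob C d x) (act_ob C d' x)" by (rule act_hom[OF g C_id[OF x]])
  have a2: "act C (Id M d') f \<in> Hom C (act_ob C d' x) (act_ob C d' y)" by (rule act_hom[OF M_id[OF d(2)] f])
  have a3: "act C (Id M d) f \<in> Hom C (act_ob C d x) (act_ob C d y)" by (rule act_hom[OF M_id[OF d(1)] f])
  have a4: "act C g (Id C y) \<in> Hom C (act_ob C d y) (act_ob C d' y)" by (rule act_hom[OF g C_id[OF y]])
  have "Comp C (Comp C f' (Comp C h (act C g (Id C x)))) (act C (Id M d') f)
      = Comp C f' (Comp C h (Comp C (act C g (Id C x)) (act C (Id M d') f)))"
    using C_assoc[OF f' C_comp[OF h a1] a2] C_assoc[OF h a1 a2] by simp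
  also have "\<dots> = Comp C f' (Comp C h (Comp C (act C (Id M d) f) (act C g (Id C y))))"
    using act_gf1[OF g f] act_gf2[OF g f] by simp
  also have "\<dots> = Comp C f' (Comp C (Comp C h (act C (Id M d) f)) (act C g (Id C y)))"
    using C_assoc[OF h a3 a4] by simp
  finally show "Comp C (Comp C f' (Comp C h (act C g (Id C x)))) (act C (Id M d') f) =
       Comp C f' (Comp C (Comp C h (act C (Id M d) f)) (act C g (Id C y)))" .
next
  fix m c n h assume m: "m \<in> Obj M" and c: "c \<in> Obj C" and n: "n \<in> Obj M"
    and h: "h \<in> Hom C c (act_ob C n x)"
  have x: "x \<in> Obj C" and y: "y \<in> Obj C" using C_obj[OF f] by auto
  have a1: "act C (Id M m) h \<in> Hom C (act_ob C m c) (act_ob C m (act_ob C n x))"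
    by (rule act_hom[OF M_id[OF m] h])
  have a2: "act C (Id M (tens_ob M m n)) f \<in> Hom C (act_ob C (tens_ob M m n) x) (act_ob C (tens_ob M m n) y)"
    by (rule act_hom[OF M_id[OF tens_obj[OF m n]] f])
  have a3: "act C (Id M n) f \<in> Hom C (act_ob C n x) (act_ob C n y)" by (rule act_hom[OF M_id[OF n] f])
  have a4: "act C (Id M m) (act C (Id M n) f) \<in> Hom C (act_ob C m (act_ob C n x)) (act_ob C m (act_ob C n y))"
    by (rule act_hom[OF M_id[OF m] a3])
  have "Comp C (Comp C (act C (Id M m) h) (act_as_inv C m n x)) (act C (Id M (tens_ob M m n)) f)
     = Comp C (act C (Id M m) h) (Comp C (act_as_inv C m n x) (act C (Id M (tens_ob M m n)) f))"
    using C_assoc[OF a1 asi_hom[OF m n x] a2] by simp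
  also have "\<dots> = Comp C (act C (Id M m) h) (Comp C (act C (Id M m) (act C (Id M n) f)) (act_as_inv C m n y))"
    using asi_nat[OF m n f] by simp
  also have "\<dots> = Comp C (Comp C (act C (Id M m) h) (act C (Id M m) (act C (Id M n) f))) (act_as_inv C m n y)"
    using C_assoc[OF a1 a4 asi_hom[OF m n y]] by simp
  also have "\<dots> = Comp C (act C (Id M m) (Comp C h (act C (Id M n) f))) (act_as_inv C m n y)"
    using act_idcomp[OF m h a3] by simp
  finally show "Comp C (Comp C (act C (Id M m) h) (act_as_inv C m n x)) (act C (Id M (tens_ob M m n)) f) =
       Comp C (act C (Id M m) (Comp C h (act C (Id M n) f))) (act_as_inv C m n y)" .
qed

lemma L_mor: assumes f: "f \<in> Hom C x y"
  shows "tamb_mor M C (Obj M) (tens_ob M) (act_ob C) (Lprof M C y) (Lprof M C x) (Lmor M C f)"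
  unfolding tamb_mor_def Lprof_def Lmor_def
proof (simp, intro conjI ballI allI impI)
  fix n c h assume n: "n \<in> Obj M" and h: "h \<in> Hom C (act_ob C n y) c"
  show "Comp C (act C (Id M n) f) h \<in> Hom C (act_ob C n x) c"
    by (rule C_comp[OF act_hom[OF M_id[OF n] f] h])
next
  fix n n' d d' g k h
  assume H: "n \<in> Obj M \<and> n' \<in> Obj M \<and> d \<in> Obj C \<and> d' \<in> Obj C \<and>
       g \<in> Hom M n' n \<and> k \<in> Hom C d d' \<and> h \<in> Hom C (act_ob C n y) d"
  have x: "x \<in> Obj C" and y: "y \<in> Obj C" using C_obj[OF f] by auto
  have k: "k \<in> Hom C d d'" and g: "g \<in> Hom M n' n" and h: "h \<in> Hom C (act_ob C n y) d" using H by auto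
  have d: "n \<in> Obj M" "n' \<in> Obj M" using H by auto
  have a1: "act C g (Id C x) \<in> Hom C (act_ob C n' x) (act_ob C n x)" by (rule act_hom[OF g C_id[OF x]])
  have a2: "act C (Id M n) f \<in> Hom C (act_ob C n x) (act_ob C n y)" by (rule act_hom[OF M_id[OF d(1)] f])
  have a3: "act C (Id M n') f \<in> Hom C (act_ob C n' x) (act_ob C n' y)" by (rule act_hom[OF M_id[OF d(2)] f])
  have a4: "act C g (Id C y) \<in> Hom C (act_ob C n' y) (act_ob C n y)" by (rule act_hom[OF g C_id[OF y]])
  have hk: "Comp C h k \<in> Hom C (act_ob C n y) d'" by (rule C_comp[OF h k])
  have "Comp C (act C (Id M n') f) (Comp C (act C g (Id C y)) (Comp C h k))
      = Comp C (Comp C (act C (Id M n') f) (act C g (Id C y))) (Comp C h k)"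
    using C_assoc[OF a3 a4 hk] by simp
  also have "\<dots> = Comp C (Comp C (act C g (Id C x)) (act C (Id M n) f)) (Comp C h k)"
    using act_gf1[OF g f] act_gf2[OF g f] by simp
  also have "\<dots> = Comp C (act C g (Id C x)) (Comp C (Comp C (act C (Id M n) f) h) k)"
    using C_assoc[OF a1 a2 hk] C_assoc[OF a2 h k] by simp
  finally show "Comp C (act C (Id M n') f) (Comp C (act C g (Id C y)) (Comp C h k)) =
       Comp C (act C g (Id C x)) (Comp C (Comp C (act C (Id M n) f) h) k)" .
next
  fix m n c h assume m: "m \<in> Obj M" and n: "n \<in> Obj M" and c: "c \<in> Obj C"
    and h: "h \<in> Hom C (act_ob C n y) c"
  have x: "x \<in> Obj C" and y: "y \<in> Obj C" using C_obj[OF f] by auto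
  have a1: "act C (Id M m) h \<in> Hom C (act_ob C m (act_ob C n y)) (act_ob C m c)"
    by (rule act_hom[OF M_id[OF m] h])
  have a2: "act C (Id M (tens_ob M m n)) f \<in> Hom C (act_ob C (tens_ob M m n) x) (act_ob C (tens_ob M m n) y)"
    by (rule act_hom[OF M_id[OF tens_obj[OF m n]] f])
  have a3: "act C (Id M n) f \<in> Hom C (act_ob C n x) (act_ob C n y)" by (rule act_hom[OF M_id[OF n] f])
  have a4: "act C (Id M m) (act C (Id M n) f) \<in> Hom C (act_ob C m (act_ob C n x)) (act_ob C m (act_ob C n y))"
    by (rule act_hom[OF M_id[OF m] a3])
  have e: "Comp C (act C (Id M (tens_ob M m n)) f) (act_as C m n y) =
        Comp C (act_as C m n x) (act C (Id M m) (act C (Id M n) f))"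
    using as_nat[OF M_id[OF m] M_id[OF n] f] tens_id[OF m n] by simp
  have "Comp C (act C (Id M (tens_ob M m n)) f) (Comp C (act_as C m n y) (act C (Id M m) h))
     = Comp C (Comp C (act C (Id M (tens_ob M m n)) f) (act_as C m n y)) (act C (Id M m) h)"
    using C_assoc[OF a2 as_hom[OF m n y] a1] by simp
  also have "\<dots> = Comp C (Comp C (act_as C m n x) (act C (Id M m) (act C (Id M n) f))) (act C (Id M m) h)"
    using e by simp
  also have "\<dots> = Comp C (act_as C m n x) (Comp C (act C (Id M m) (act C (Id M n) f)) (act C (Id M m) h))"
    using C_assoc[OF as_hom[OF m n x] a4 a1] by simp
  also have "\<dots> = Comp C (act_as C m n x) (act C (Id M m) (Comp C (act C (Id M n) f) h))"
    using act_idcomp[OF m a3 h] by simp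
  finally show "Comp C (act C (Id M (tens_ob M m n)) f) (Comp C (act_as C m n y) (act C (Id M m) h)) =
       Comp C (act_as C m n x) (act C (Id M m) (Comp C (act C (Id M n) f) h))" .
qed

lemma R_full: assumes x: "x \<in> Obj C" and y: "y \<in> Obj C"
  and T: "tamb_mor C M (Obj M) (act_ob C) (tens_ob M) (Rprof M C x) (Rprof M C y) \<tau>"
  shows "\<exists>!f. f \<in> Hom C x y \<and> tamb_eq C M (Rprof M C x) \<tau> (Rmor M C f)"
proof -
  have T1: "\<And>c d u. c \<in> Obj C \<Longrightarrow> d \<in> Obj M \<Longrightarrow> u \<in> Hom C c (act_ob C d x) \<Longrightarrow> \<tau> c d u \<in> Hom C c (act_ob C d y)"
    using T unfolding tamb_mor_def Rprof_def by simp
  have T2: "\<And>c c' d d' f g u. c \<in> Obj C \<Longrightarrow> c' \<in> Obj C \<Longrightarrow> d \<in> Obj M \<Longrightarrow> d' \<in> Obj M \<Longrightarrow>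
        f \<in> Hom C c' c \<Longrightarrow> g \<in> Hom M d d' \<Longrightarrow> u \<in> Hom C c (act_ob C d x) \<Longrightarrow>
        \<tau> c' d' (Comp C f (Comp C u (act C g (Id C x)))) = Comp C f (Comp C (\<tau> c d u) (act C g (Id C y)))"
    using T unfolding tamb_mor_def Rprof_def by simp
  have T3: "\<And>m c d u. m \<in> Obj M \<Longrightarrow> c \<in> Obj C \<Longrightarrow> d \<in> Obj M \<Longrightarrow> u \<in> Hom C c (act_ob C d x) \<Longrightarrow>
        \<tau> (act_ob C m c) (tens_ob M m d) (Comp C (act C (Id M m) u) (act_as_inv C m d x))
         = Comp C (act C (Id M m) (\<tau> c d u)) (act_as_inv C m d y)"
    using T unfolding tamb_mor_def Rprof_def by simp
  define t where "t = \<tau> x I (act_lu_inv C x)"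
  have t: "t \<in> Hom C x (act_ob C I y)" unfolding t_def by (rule T1[OF x unit_obj lui_hom[OF x]])
  define f where "f = Comp C t (act_lu C y)"
  have f: "f \<in> Hom C x y" unfolding f_def by (rule C_comp[OF t lu_hom[OF y]])
  have eq: "\<tau> c n h = Comp C h (act C (Id M n) f)" if c: "c \<in> Obj C" and n: "n \<in> Obj M"
    and h: "h \<in> Hom C c (act_ob C n x)" for c n h
  proof -
    have nx: "act_ob C n x \<in> Obj C" by (rule act_obj[OF n x])
    have nI: "tens_ob M n I \<in> Obj M" by (rule tens_obj[OF n unit_obj])
    have u: "Comp C (act C (Id M n) (act_lu_inv C x)) (act_as_inv C n I x) \<in> Hom C (act_ob C n x) (act_ob C (tens_ob M n I) x)"
      by (rule C_comp[OF act_hom[OF M_id[OF n] lui_hom[OF x]] asi_hom[OF n unit_obj x]])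
    have h1: "h = Comp C h (Comp C (Comp C (act C (Id M n) (act_lu_inv C x)) (act_as_inv C n I x)) (act C (ru M n) (Id C x)))"
      using R_key[OF n x lui_hom[OF x]] lui_lu[OF x] act_id[OF n x] C_idr[OF h] by simp
    have "\<tau> c n h = \<tau> c n (Comp C h (Comp C (Comp C (act C (Id M n) (act_lu_inv C x)) (act_as_inv C n I x)) (act C (ru M n) (Id C x))))"
      using h1 by simp
    also have "\<dots> = Comp C h (Comp C (\<tau> (act_ob C n x) (tens_ob M n I) (Comp C (act C (Id M n) (act_lu_inv C x)) (act_as_inv C n I x))) (act C (ru M n) (Id C y)))"
      by (rule T2[OF nx c nI n h ru_hom[OF n] u])
    also have "\<dots> = Comp C h (Comp C (Comp C (act C (Id M n) t) (act_as_inv C n I y)) (act C (ru M n) (Id C y)))"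
      using T3[OF n x unit_obj lui_hom[OF x]] unfolding t_def by simp
    also have "\<dots> = Comp C h (act C (Id M n) f)"
      using R_key[OF n y t] unfolding f_def by simp
    finally show ?thesis .
  qed
  show ?thesis
  proof (rule ex1I[where a=f])
    show "f \<in> Hom C x y \<and> tamb_eq C M (Rprof M C x) \<tau> (Rmor M C f)"
      using f eq unfolding tamb_eq_def Rprof_def Rmor_def by simp
  next
    fix g assume g: "g \<in> Hom C x y \<and> tamb_eq C M (Rprof M C x) \<tau> (Rmor M C g)"
    have "\<tau> x I (act_lu_inv C x) = Comp C (act_lu_inv C x) (act C (Id M I) g)"
      using g x unit_obj lui_hom[OF x] unfolding tamb_eq_def Rprof_def Rmor_def by simp
    moreover have "\<tau> x I (act_lu_inv C x) = Comp C (act_lu_inv C x) (act C (Id M I) f)"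
      using eq[OF x unit_obj lui_hom[OF x]] .
    ultimately have e: "Comp C (act_lu_inv C x) (act C (Id M I) g) = Comp C (act_lu_inv C x) (act C (Id M I) f)" by simp
    have "g = Comp C (Comp C (act_lu_inv C x) (act C (Id M I) g)) (act_lu C y)"
      using lu_cancel[of g x y] g C_assoc[OF lui_hom[OF x] act_hom[OF M_id[OF unit_obj]] lu_hom[OF y]] by simp
    also have "\<dots> = Comp C (Comp C (act_lu_inv C x) (act C (Id M I) f)) (act_lu C y)" using e by simp
    also have "\<dots> = f"
      using lu_cancel[OF f] C_assoc[OF lui_hom[OF x] act_hom[OF M_id[OF unit_obj] f] lu_hom[OF y]] by simp
    finally show "g = f" .
  qed
qed

lemma L_full: assumes x: "x \<in> Obj C" and y: "y \<in> Obj C"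
  and T: "tamb_mor M C (Obj M) (tens_ob M) (act_ob C) (Lprof M C y) (Lprof M C x) \<tau>"
  shows "\<exists>!f. f \<in> Hom C x y \<and> tamb_eq M C (Lprof M C y) \<tau> (Lmor M C f)"
proof -
  have T1: "\<And>n c u. n \<in> Obj M \<Longrightarrow> c \<in> Obj C \<Longrightarrow> u \<in> Hom C (act_ob C n y) c \<Longrightarrow> \<tau> n c u \<in> Hom C (act_ob C n x) c"
    using T unfolding tamb_mor_def Lprof_def by simp
  have T2: "\<And>n n' d d' g k u. n \<in> Obj M \<Longrightarrow> n' \<in> Obj M \<Longrightarrow> d \<in> Obj C \<Longrightarrow> d' \<in> Obj C \<Longrightarrow>
        g \<in> Hom M n' n \<Longrightarrow> k \<in> Hom C d d' \<Longrightarrow> u \<in> Hom C (act_ob C n y) d \<Longrightarrow>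
        \<tau> n' d' (Comp C (act C g (Id C y)) (Comp C u k)) = Comp C (act C g (Id C x)) (Comp C (\<tau> n d u) k)"
    using T unfolding tamb_mor_def Lprof_def by simp
  have T3: "\<And>m n d u. m \<in> Obj M \<Longrightarrow> n \<in> Obj M \<Longrightarrow> d \<in> Obj C \<Longrightarrow> u \<in> Hom C (act_ob C n y) d \<Longrightarrow>
        \<tau> (tens_ob M m n) (act_ob C m d) (Comp C (act_as C m n y) (act C (Id M m) u))
         = Comp C (act_as C m n x) (act C (Id M m) (\<tau> n d u))"
    using T unfolding tamb_mor_def Lprof_def by simp
  define t where "t = \<tau> I y (act_lu C y)"
  have t: "t \<in> Hom C (act_ob C I x) y" unfolding t_def by (rule T1[OF unit_obj y lu_hom[OF y]])
  define f where "f = Comp C (act_lu_inv C x) t"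
  have f: "f \<in> Hom C x y" unfolding f_def by (rule C_comp[OF lui_hom[OF x] t])
  have eq: "\<tau> n c h = Comp C (act C (Id M n) f) h" if n: "n \<in> Obj M" and c: "c \<in> Obj C"
    and h: "h \<in> Hom C (act_ob C n y) c" for c n h
  proof -
    have ny: "act_ob C n y \<in> Obj C" by (rule act_obj[OF n y])
    have nI: "tens_ob M n I \<in> Obj M" by (rule tens_obj[OF n unit_obj])
    have u: "Comp C (act_as C n I y) (act C (Id M n) (act_lu C y)) \<in> Hom C (act_ob C (tens_ob M n I) y) (act_ob C n y)"
      by (rule C_comp[OF as_hom[OF n unit_obj y] act_hom[OF M_id[OF n] lu_hom[OF y]]])
    have r1: "act C (ru_inv M n) (Id C y) \<in> Hom C (act_ob C n y) (act_ob C (tens_ob M n I) y)"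
      by (rule act_hom[OF rui_hom[OF n] C_id[OF y]])
    have r2: "act C (ru_inv M n) (Id C x) \<in> Hom C (act_ob C n x) (act_ob C (tens_ob M n I) x)"
      by (rule act_hom[OF rui_hom[OF n] C_id[OF x]])
    have v: "Comp C (act_as C n I x) (act C (Id M n) t) \<in> Hom C (act_ob C (tens_ob M n I) x) (act_ob C n y)"
      by (rule C_comp[OF as_hom[OF n unit_obj x] act_hom[OF M_id[OF n] t]])
    have h1: "h = Comp C (act C (ru_inv M n) (Id C y)) (Comp C (Comp C (act_as C n I y) (act C (Id M n) (act_lu C y))) h)"
      using L_key[OF n y lu_hom[OF y]] lui_lu[OF y] act_id[OF n y] C_idl[OF h] C_assoc[OF r1 u h] by simp
    have "\<tau> n c h = \<tau> n c (Comp C (act C (ru_inv M n) (Id C y)) (Comp C (Comp C (act_as C n I y) (act C (Id M n) (act_lu C y))) h))"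
      using h1 by simp
    also have "\<dots> = Comp C (act C (ru_inv M n) (Id C x)) (Comp C (\<tau> (tens_ob M n I) (act_ob C n y) (Comp C (act_as C n I y) (act C (Id M n) (act_lu C y)))) h)"
      by (rule T2[OF nI n ny c rui_hom[OF n] h u])
    also have "\<dots> = Comp C (act C (ru_inv M n) (Id C x)) (Comp C (Comp C (act_as C n I x) (act C (Id M n) t)) h)"
      using T3[OF n unit_obj y lu_hom[OF y]] unfolding t_def by simp
    also have "\<dots> = Comp C (Comp C (act C (ru_inv M n) (Id C x)) (Comp C (act_as C n I x) (act C (Id M n) t))) h"
      using C_assoc[OF r2 v h] by simp
    also have "\<dots> = Comp C (act C (Id M n) f) h"
      using L_key[OF n x t] unfolding f_def by simp
    finally show ?thesis .
  qed
  show ?thesis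
  proof (rule ex1I[where a=f])
    show "f \<in> Hom C x y \<and> tamb_eq M C (Lprof M C y) \<tau> (Lmor M C f)"
      using f eq unfolding tamb_eq_def Lprof_def Lmor_def by simp
  next
    fix g assume g: "g \<in> Hom C x y \<and> tamb_eq M C (Lprof M C y) \<tau> (Lmor M C g)"
    have "\<tau> I y (act_lu C y) = Comp C (act C (Id M I) g) (act_lu C y)"
      using g y unit_obj lu_hom[OF y] unfolding tamb_eq_def Lprof_def Lmor_def by simp
    moreover have "\<tau> I y (act_lu C y) = Comp C (act C (Id M I) f) (act_lu C y)"
      using eq[OF unit_obj y lu_hom[OF y]] .
    ultimately have e: "Comp C (act C (Id M I) g) (act_lu C y) = Comp C (act C (Id M I) f) (act_lu C y)" by simp
    have "g = Comp C (act_lu_inv C x) (Comp C (act C (Id M I) g) (act_lu C y))"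
      using lu_cancel[of g x y] g by simp
    also have "\<dots> = Comp C (act_lu_inv C x) (Comp C (act C (Id M I) f) (act_lu C y))" using e by simp
    also have "\<dots> = f" using lu_cancel[OF f] by simp
    finally show "g = f" .
  qed
qed

end

theorem mainTheorem7:
  fixes M :: "('m, 'ma) moncat" and C :: "('m, 'ma, 'c, 'ca) actegory"
  assumes "monoidal M" and "is_actegory M C"
  shows "(\<forall>x\<in>Obj C. \<forall>y\<in>Obj C.
            (\<forall>f\<in>Hom C x y. tamb_mor C M (Obj M) (act_ob C) (tens_ob M)
                               (Rprof M C x) (Rprof M C y) (Rmor M C f)) \<and>
            (\<forall>\<tau>. tamb_mor C M (Obj M) (act_ob C) (tens_ob M) (Rprof M C x) (Rprof M C y) \<tau> \<longrightarrow>
                 (\<exists>!f. f \<in> Hom C x y \<and> tamb_eq C M (Rprof M C x) \<tau> (Rmor M C f))))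
       \<and> (\<forall>x\<in>Obj C. \<forall>y\<in>Obj C.
            (\<forall>f\<in>Hom C x y. tamb_mor M C (Obj M) (tens_ob M) (act_ob C)
                               (Lprof M C y) (Lprof M C x) (Lmor M C f)) \<and>
            (\<forall>\<tau>. tamb_mor M C (Obj M) (tens_ob M) (act_ob C) (Lprof M C y) (Lprof M C x) \<tau> \<longrightarrow>
                 (\<exists>!f. f \<in> Hom C x y \<and> tamb_eq M C (Lprof M C y) \<tau> (Lmor M C f))))"
proof -
  interpret actx M C using assms by unfold_locales
  show ?thesis using R_mor R_full L_mor L_full by blast
qed

end
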